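(* Let $\mathcal A$ be a finite nonempty alphabet, let $\omega\in\mathcal A^{\mathbb N}$ be uniformly recurrent, and let $u\in\mathcal A^+$ be a nonempty finite word. Then $\omega|_u$ is an IP-set if and only if $\omega|_u$ is a central set.
   Context: $\mathbb N=\{0,1,2,\dots\}$. For $\omega=\omega_0\omega_1\omega_2\cdots\in\mathcal A^{\mathbb N}$ and a nonempty finite word $u$, $\omega|_u=\{n\in\mathbb N : \omega_n\omega_{n+1}\cdots\omega_{n+|u|-1}=u\}$ (the set of occurrences of $u$). $\omega$ is uniformly recurrent if for every factor $u$ of $\omega$ the set $\omega|_u$ has bounded gaps. A set $A\subseteq\mathbb N$ is an IP-set if there is a sequence $x_0<x_1<x_2<\cdots$ of natural numbers with $\sum_{n\in F}x_n\in A$ for every nonempty finite $F\subseteq\mathbb N$. $\beta\mathbb N$ is the set of ultrafilters on $\mathbb N$ with addition defined by $A\in p+q$ iff $\{n\in\mathbb N: A-n\in p\}\in q$, where $A-n=\{m: m+n\in A\}$; this makes $\beta\mathbb N$ a compact left-topological semigroup with a smallest two-sided ideal $K(\beta\mathbb N)$. An idempotent is a non-principal ultrafilter $p$ with $p+p=p$; a minimal idempotent is an idempotent lying in $K(\beta\mathbb N)$. A set $A\subseteq\mathbb N$ is central if it belongs to some minimal idempotent. *)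

theory Defs
  imports Main
begin

definition occurrences :: "(nat \<Rightarrow> 'a) \<Rightarrow> 'a list \<Rightarrow> nat set" where
  "occurrences w u = {n. \<forall>i<length u. w (n + i) = u ! i}"

definition is_factor :: "(nat \<Rightarrow> 'a) \<Rightarrow> 'a list \<Rightarrow> bool" where
  "is_factor w u \<longleftrightarrow> u \<noteq> [] \<and> occurrences w u \<noteq> {}"

definition bounded_gaps :: "nat set \<Rightarrow> bool" where
  "bounded_gaps S \<longleftrightarrow> (\<exists>g. \<forall>n. \<exists>m\<in>S. n \<le> m \<and> m < n + g)"

definition uniformly_recurrent :: "(nat \<Rightarrow> 'a) \<Rightarrow> bool" where
  "uniformly_recurrent w \<longleftrightarrow> (\<forall>u. is_factor w u \<longrightarrow> bounded_gaps (occurrences w u))"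

definition IP_set :: "nat set \<Rightarrow> bool" where
  "IP_set A \<longleftrightarrow> (\<exists>x :: nat \<Rightarrow> nat. strict_mono x \<and>
      (\<forall>F. finite F \<and> F \<noteq> {} \<longrightarrow> (\<Sum>n\<in>F. x n) \<in> A))"

section \<open>The Stone-Cech compactification \<open>\<beta>\<nat>\<close> as ultrafilters on nat\<close>

definition is_ultrafilter :: "nat set set \<Rightarrow> bool" where
  "is_ultrafilter p \<longleftrightarrow>
     UNIV \<in> p \<and> {} \<notin> p \<and>
     (\<forall>A B. A \<in> p \<and> A \<subseteq> B \<longrightarrow> B \<in> p) \<and>
     (\<forall>A B. A \<in> p \<and> B \<in> p \<longrightarrow> A \<inter> B \<in> p) \<and>
     (\<forall>A. A \<in> p \<or> - A \<in> p)"

definition betaN :: "nat set set set" where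
  "betaN = {p. is_ultrafilter p}"

definition principal :: "nat set set \<Rightarrow> bool" where
  "principal p \<longleftrightarrow> (\<exists>n. {n} \<in> p)"

definition shift_set :: "nat set \<Rightarrow> nat \<Rightarrow> nat set" where
  "shift_set A n = {m. m + n \<in> A}"

definition uf_add :: "nat set set \<Rightarrow> nat set set \<Rightarrow> nat set set" (infixl "\<oplus>\<^sub>\<beta>" 65) where
  "p \<oplus>\<^sub>\<beta> q = {A. {n. shift_set A n \<in> p} \<in> q}"

definition two_sided_ideal :: "nat set set set \<Rightarrow> bool" where
  "two_sided_ideal I \<longleftrightarrow> I \<noteq> {} \<and> I \<subseteq> betaN \<and>
     (\<forall>p\<in>betaN. \<forall>q\<in>I. p \<oplus>\<^sub>\<beta> q \<in> I \<and> q \<oplus>\<^sub>\<beta> p \<in> I)"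

definition K_betaN :: "nat set set set" where
  "K_betaN = \<Inter> {I. two_sided_ideal I}"

definition idempotent :: "nat set set \<Rightarrow> bool" where
  "idempotent p \<longleftrightarrow> p \<in> betaN \<and> \<not> principal p \<and> p \<oplus>\<^sub>\<beta> p = p"

definition minimal_idempotent :: "nat set set \<Rightarrow> bool" where
  "minimal_idempotent p \<longleftrightarrow> idempotent p \<and> p \<in> K_betaN"

definition central :: "nat set \<Rightarrow> bool" where
  "central A \<longleftrightarrow> (\<exists>p. minimal_idempotent p \<and> A \<in> p)"

end

theory Submission
  imports Defs
begin


lemma min_Zorn:
  assumes "\<A> \<noteq> {}"
    and ch: "\<And>\<C>. \<C> \<noteq> {} \<Longrightarrow> \<C> \<subseteq> \<A> \<Longrightarrow> (\<forall>X\<in>\<C>. \<forall>Y\<in>\<C>. X \<subseteq> Y \<or> Y \<subseteq> X) \<Longrightarrow> \<Inter>\<C> \<in> \<A>"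
  shows "\<exists>M\<in>\<A>. \<forall>X\<in>\<A>. X \<subseteq> M \<longrightarrow> X = M"
proof -
  have "\<exists>M\<in>uminus ` \<A>. \<forall>X\<in>uminus ` \<A>. M \<subseteq> X \<longrightarrow> X = M"
  proof (rule subset_Zorn_nonempty)
    show "uminus ` \<A> \<noteq> {}" using assms(1) by auto
  next
    fix \<C> assume C: "\<C> \<noteq> {}" "subset.chain (uminus ` \<A>) \<C>"
    define \<D> where "\<D> = uminus ` \<C>"
    have D: "\<D> \<noteq> {}" "\<D> \<subseteq> \<A>" "\<forall>X\<in>\<D>. \<forall>Y\<in>\<D>. X \<subseteq> Y \<or> Y \<subseteq> X"
      using C unfolding \<D>_def subset_chain_def by auto
    have "\<Inter>\<D> \<in> \<A>" using ch[OF D] .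
    moreover have "\<Union>\<C> = - \<Inter>\<D>" unfolding \<D>_def by auto
    ultimately show "\<Union>\<C> \<in> uminus ` \<A>" by auto
  qed
  then obtain M where M: "M \<in> \<A>" "\<forall>X\<in>\<A>. -M \<subseteq> -X \<longrightarrow> -X = -M" by auto
  then show ?thesis by (metis Compl_subset_Compl_iff compl_eq_compl_iff)
qed

lemma uf_UNIV: "is_ultrafilter p \<Longrightarrow> UNIV \<in> p"
  by (simp add: is_ultrafilter_def)
lemma uf_empty: "is_ultrafilter p \<Longrightarrow> {} \<notin> p"
  by (simp add: is_ultrafilter_def)
lemma uf_mono: "is_ultrafilter p \<Longrightarrow> A \<in> p \<Longrightarrow> A \<subseteq> B \<Longrightarrow> B \<in> p"
  unfolding is_ultrafilter_def by blast
lemma uf_Int: "is_ultrafilter p \<Longrightarrow> (A \<inter> B \<in> p) = (A \<in> p \<and> B \<in> p)"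
  unfolding is_ultrafilter_def by (meson Int_lower1 Int_lower2)
lemma uf_Compl: "is_ultrafilter p \<Longrightarrow> (- A \<in> p) = (A \<notin> p)"
  unfolding is_ultrafilter_def by (metis Int_commute Compl_disjoint)
lemma uf_Un: "is_ultrafilter p \<Longrightarrow> (A \<union> B \<in> p) = (A \<in> p \<or> B \<in> p)"
proof -
  assume u: "is_ultrafilter p"
  have "A \<union> B = - (-A \<inter> -B)" by auto
  then show ?thesis using uf_Compl[OF u] uf_Int[OF u] by metis
qed
lemma uf_nonempty: "is_ultrafilter p \<Longrightarrow> A \<in> p \<Longrightarrow> A \<noteq> {}"
  using uf_empty by blast
lemma uf_eq: "is_ultrafilter p \<Longrightarrow> is_ultrafilter q \<Longrightarrow> p \<subseteq> q \<Longrightarrow> p = q"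
proof (rule subset_antisym, assumption, rule subsetI)
  fix A assume u: "is_ultrafilter p" "is_ultrafilter q" "p \<subseteq> q" "A \<in> q"
  show "A \<in> p"
  proof (rule ccontr)
    assume "A \<notin> p"
    then have "- A \<in> q" using u uf_Compl by blast
    then show False using u uf_Compl by blast
  qed
qed

lemma uf_finite_Union:
  assumes u: "is_ultrafilter p" and "finite I"
  shows "(\<Union>i\<in>I. X i) \<in> p \<Longrightarrow> \<exists>i\<in>I. X i \<in> p"
  using \<open>finite I\<close>
proof (induction I rule: finite_induct)
  case empty then show ?case using uf_empty[OF u] by simp
next
  case (insert a F) then show ?case using uf_Un[OF u] by auto
qed

lemma uf_finite_Inter:
  assumes u: "is_ultrafilter p" and "finite I"
  shows "(\<forall>i\<in>I. X i \<in> p) \<Longrightarrow> (\<Inter>i\<in>I. X i) \<in> p"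
  using \<open>finite I\<close>
proof (induction I rule: finite_induct)
  case empty then show ?case using uf_UNIV[OF u] by simp
next
  case (insert a F) then show ?case using uf_Int[OF u] by auto
qed

lemma uf_finite_notin:
  assumes u: "is_ultrafilter p" and np: "\<not> principal p" and "finite F"
  shows "F \<notin> p"
proof
  assume "F \<in> p"
  moreover have "F = (\<Union>x\<in>F. {x})" by auto
  ultimately have "\<exists>x\<in>F. {x} \<in> p" using uf_finite_Union[OF u \<open>finite F\<close>, of "\<lambda>x. {x}"] by simp
  then show False using np unfolding principal_def by auto
qed

lemma uf_principal:
  assumes u: "is_ultrafilter p" and "{n} \<in> p"
  shows "(A \<in> p) = (n \<in> A)"
proof
  assume "A \<in> p"
  then have "{n} \<inter> A \<in> p" using assms uf_Int by blast
  then show "n \<in> A" using uf_empty[OF u] by (metis Int_insert_left_if0 inf_bot_left)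
next
  assume "n \<in> A" then show "A \<in> p" using assms uf_mono by blast
qed

section \<open>Ultrafilter lemma\<close>

definition pfilter :: "nat set set \<Rightarrow> bool" where
  "pfilter F \<longleftrightarrow> UNIV \<in> F \<and> {} \<notin> F \<and> (\<forall>A B. A \<in> F \<and> A \<subseteq> B \<longrightarrow> B \<in> F) \<and>
     (\<forall>A B. A \<in> F \<and> B \<in> F \<longrightarrow> A \<inter> B \<in> F)"

lemma pf_Int: "pfilter F \<Longrightarrow> A \<in> F \<Longrightarrow> B \<in> F \<Longrightarrow> A \<inter> B \<in> F"
  unfolding pfilter_def by blast
lemma pf_mono: "pfilter F \<Longrightarrow> A \<in> F \<Longrightarrow> A \<subseteq> B \<Longrightarrow> B \<in> F"
  unfolding pfilter_def by blast
lemma pf_UNIV: "pfilter F \<Longrightarrow> UNIV \<in> F"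
  unfolding pfilter_def by blast
lemma pf_empty: "pfilter F \<Longrightarrow> {} \<notin> F"
  unfolding pfilter_def by blast
lemma pfilterI: "UNIV \<in> F \<Longrightarrow> {} \<notin> F \<Longrightarrow> (\<And>A B. A \<in> F \<Longrightarrow> A \<subseteq> B \<Longrightarrow> B \<in> F) \<Longrightarrow>
   (\<And>A B. A \<in> F \<Longrightarrow> B \<in> F \<Longrightarrow> A \<inter> B \<in> F) \<Longrightarrow> pfilter F"
  unfolding pfilter_def by blast

lemma ultrafilter_exists:
  assumes dir: "\<forall>A\<in>B. \<forall>C\<in>B. \<exists>D\<in>B. D \<subseteq> A \<inter> C" and ne: "{} \<notin> B"
  shows "\<exists>p. is_ultrafilter p \<and> B \<subseteq> p"
proof -
  define \<A> where "\<A> = {F. pfilter F \<and> B \<subseteq> F}"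
  define F0 where "F0 = {X. X = UNIV \<or> (\<exists>b\<in>B. b \<subseteq> X)}"
  have F0int: "A \<inter> C \<in> F0" if "A \<in> F0" "C \<in> F0" for A C
  proof -
    have A': "A = UNIV \<or> (\<exists>b\<in>B. b \<subseteq> A)" using that(1) unfolding F0_def by simp
    have C': "C = UNIV \<or> (\<exists>b\<in>B. b \<subseteq> C)" using that(2) unfolding F0_def by simp
    show ?thesis
    proof (cases "A = UNIV")
      case True then show ?thesis using that(2) by simp
    next
      case nA: False
      show ?thesis
      proof (cases "C = UNIV")
        case True then show ?thesis using that(1) by simp
      next
        case False
        from A' nA obtain a where a: "a \<in> B" "a \<subseteq> A" by blast
        from C' False obtain c where c: "c \<in> B" "c \<subseteq> C" by blast
        from dir a(1) c(1) obtain d where "d \<in> B" "d \<subseteq> a \<inter> c" by blast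
        then have "d \<subseteq> A \<inter> C" using a c by blast
        then show ?thesis unfolding F0_def using \<open>d \<in> B\<close> by blast
      qed
    qed
  qed
  have F0: "F0 \<in> \<A>"
    unfolding \<A>_def
  proof (intro CollectI conjI pfilterI)
    show "UNIV \<in> F0" unfolding F0_def by blast
    show "{} \<notin> F0" unfolding F0_def using ne by auto
    show "B \<subseteq> F0" unfolding F0_def by blast
  next
    fix X Y assume "X \<in> F0" "X \<subseteq> Y"
    then show "Y \<in> F0" unfolding F0_def by auto
  next
    fix X Y assume "X \<in> F0" "Y \<in> F0"
    then show "X \<inter> Y \<in> F0" using F0int by blast
  qed
  have "\<exists>M\<in>\<A>. \<forall>X\<in>\<A>. M \<subseteq> X \<longrightarrow> X = M"
  proof (rule subset_Zorn_nonempty)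
    show "\<A> \<noteq> {}" using F0 by auto
  next
    fix \<C> assume C: "\<C> \<noteq> {}" "subset.chain \<A> \<C>"
    then have CA: "\<C> \<subseteq> \<A>" and tot: "\<forall>X\<in>\<C>. \<forall>Y\<in>\<C>. X \<subseteq> Y \<or> Y \<subseteq> X"
      by (auto simp: subset_chain_def)
    have pC: "pfilter F" if "F \<in> \<C>" for F using that CA unfolding \<A>_def by auto
    show "\<Union>\<C> \<in> \<A>"
      unfolding \<A>_def
    proof (intro CollectI conjI pfilterI)
      fix X Y assume "X \<in> \<Union>\<C>" "Y \<in> \<Union>\<C>"
      then obtain F G where FG: "F \<in> \<C>" "G \<in> \<C>" "X \<in> F" "Y \<in> G" by auto
      from tot FG(1,2) have "F \<subseteq> G \<or> G \<subseteq> F" by blast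
      then show "X \<inter> Y \<in> \<Union>\<C>"
      proof
        assume "F \<subseteq> G" then have "X \<inter> Y \<in> G" using pf_Int[OF pC[OF FG(2)]] FG by blast
        then show ?thesis using FG by blast
      next
        assume "G \<subseteq> F" then have "X \<inter> Y \<in> F" using pf_Int[OF pC[OF FG(1)]] FG by blast
        then show ?thesis using FG by blast
      qed
    next
      fix X Y assume "X \<in> \<Union>\<C>" "X \<subseteq> Y"
      then obtain F where "F \<in> \<C>" "X \<in> F" by auto
      then show "Y \<in> \<Union>\<C>" using pf_mono[OF pC] \<open>X \<subseteq> Y\<close> by blast
    next
      obtain F where "F \<in> \<C>" using C(1) by auto
      then show "UNIV \<in> \<Union>\<C>" using pf_UNIV[OF pC] by blast
    next
      show "{} \<notin> \<Union>\<C>" using pf_empty[OF pC] by blast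
    next
      obtain F where "F \<in> \<C>" using C(1) by auto
      then show "B \<subseteq> \<Union>\<C>" using CA unfolding \<A>_def by blast
    qed
  qed
  then obtain M where M: "M \<in> \<A>" and max: "\<forall>X\<in>\<A>. M \<subseteq> X \<longrightarrow> X = M" by blast
  have pf: "pfilter M" and BM: "B \<subseteq> M" using M by (auto simp: \<A>_def)
  have "A \<in> M \<or> - A \<in> M" for A
  proof (rule ccontr)
    assume nA: "\<not> (A \<in> M \<or> - A \<in> M)"
    have disj: "m \<inter> A \<noteq> {}" if "m \<in> M" for m
    proof
      assume "m \<inter> A = {}"
      then have "m \<subseteq> -A" by auto
      then show False using nA pf_mono[OF pf that] by blast
    qed
    define M' where "M' = {X. \<exists>m\<in>M. m \<inter> A \<subseteq> X}"
    have "M' \<in> \<A>"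
      unfolding \<A>_def
    proof (intro CollectI conjI pfilterI)
      show "UNIV \<in> M'" using pf_UNIV[OF pf] unfolding M'_def by auto
      show "{} \<notin> M'" using disj unfolding M'_def by auto
      show "B \<subseteq> M'" using BM unfolding M'_def by auto
    next
      fix X Y assume "X \<in> M'" "X \<subseteq> Y"
      then show "Y \<in> M'" unfolding M'_def by auto
    next
      fix X Y assume "X \<in> M'" "Y \<in> M'"
      then obtain m m' where mm: "m \<in> M" "m' \<in> M" "m \<inter> A \<subseteq> X" "m' \<inter> A \<subseteq> Y" unfolding M'_def by auto
      moreover have "m \<inter> m' \<in> M" using pf_Int[OF pf mm(1,2)] .
      have "(m \<inter> m') \<inter> A \<subseteq> X \<inter> Y" using mm by auto
      then show "X \<inter> Y \<in> M'" unfolding M'_def using \<open>m \<inter> m' \<in> M\<close> by auto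
    qed
    moreover have "M \<subseteq> M'" unfolding M'_def by auto
    ultimately have "M' = M" using max by blast
    moreover have "A \<in> M'" using pf_UNIV[OF pf] unfolding M'_def by auto
    ultimately show False using nA by simp
  qed
  then have "is_ultrafilter M" using pf_UNIV[OF pf] pf_empty[OF pf] pf_mono[OF pf] pf_Int[OF pf]
    unfolding is_ultrafilter_def by metis
  then show ?thesis using BM by blast
qed



lemma shift_Int[simp]: "shift_set (A \<inter> B) n = shift_set A n \<inter> shift_set B n"
  by (auto simp: shift_set_def)
lemma shift_Compl[simp]: "shift_set (- A) n = - shift_set A n"
  by (auto simp: shift_set_def)
lemma shift_UNIV[simp]: "shift_set UNIV n = UNIV"
  by (auto simp: shift_set_def)
lemma shift_empty[simp]: "shift_set {} n = {}"
  by (auto simp: shift_set_def)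
lemma shift_mono: "A \<subseteq> B \<Longrightarrow> shift_set A n \<subseteq> shift_set B n"
  by (auto simp: shift_set_def)
lemma shift_shift: "shift_set (shift_set A n) m = shift_set A (m + n)"
  by (auto simp: shift_set_def add.assoc)

lemma uf_add_mem: "A \<in> p \<oplus>\<^sub>\<beta> q \<longleftrightarrow> {n. shift_set A n \<in> p} \<in> q"
  by (simp add: uf_add_def)

lemma uf_intro:
  assumes "UNIV \<in> p" "{} \<notin> p" "\<And>A B. A \<in> p \<Longrightarrow> A \<subseteq> B \<Longrightarrow> B \<in> p"
    "\<And>A B. A \<in> p \<Longrightarrow> B \<in> p \<Longrightarrow> A \<inter> B \<in> p" "\<And>A. A \<in> p \<or> - A \<in> p"
  shows "is_ultrafilter p"
  unfolding is_ultrafilter_def using assms by blast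

lemma uf_add_uf:
  assumes p: "is_ultrafilter p" and q: "is_ultrafilter q"
  shows "is_ultrafilter (p \<oplus>\<^sub>\<beta> q)"
proof (rule uf_intro)
  show "UNIV \<in> p \<oplus>\<^sub>\<beta> q" unfolding uf_add_mem using uf_UNIV[OF p] uf_UNIV[OF q] by simp
  show "{} \<notin> p \<oplus>\<^sub>\<beta> q" unfolding uf_add_mem using uf_empty[OF p] uf_empty[OF q] by simp
next
  fix A B assume A: "A \<in> p \<oplus>\<^sub>\<beta> q" and AB: "A \<subseteq> B"
  have "{n. shift_set A n \<in> p} \<subseteq> {n. shift_set B n \<in> p}"
  proof
    fix n assume "n \<in> {n. shift_set A n \<in> p}"
    then have "shift_set A n \<in> p" by simp
    then have "shift_set B n \<in> p" using uf_mono[OF p _ shift_mono[OF AB]] by blast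
    then show "n \<in> {n. shift_set B n \<in> p}" by simp
  qed
  then show "B \<in> p \<oplus>\<^sub>\<beta> q" using A uf_mono[OF q] unfolding uf_add_mem by blast
next
  fix A B assume A: "A \<in> p \<oplus>\<^sub>\<beta> q" and B: "B \<in> p \<oplus>\<^sub>\<beta> q"
  have "{n. shift_set (A \<inter> B) n \<in> p} = {n. shift_set A n \<in> p} \<inter> {n. shift_set B n \<in> p}"
    using uf_Int[OF p] by auto
  then show "A \<inter> B \<in> p \<oplus>\<^sub>\<beta> q" using A B uf_Int[OF q] unfolding uf_add_mem by simp
next
  fix A
  have "{n. shift_set (- A) n \<in> p} = - {n. shift_set A n \<in> p}"
    using uf_Compl[OF p] by auto
  then show "A \<in> p \<oplus>\<^sub>\<beta> q \<or> - A \<in> p \<oplus>\<^sub>\<beta> q"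
    using uf_Compl[OF q] unfolding uf_add_mem by simp
qed

lemma uf_add_assoc: "(p \<oplus>\<^sub>\<beta> q) \<oplus>\<^sub>\<beta> r = p \<oplus>\<^sub>\<beta> (q \<oplus>\<^sub>\<beta> r)"
proof -
  have "A \<in> (p \<oplus>\<^sub>\<beta> q) \<oplus>\<^sub>\<beta> r \<longleftrightarrow> A \<in> p \<oplus>\<^sub>\<beta> (q \<oplus>\<^sub>\<beta> r)" for A
  proof -
    have "{n. {m. shift_set (shift_set A n) m \<in> p} \<in> q} = {n. shift_set {m. shift_set A m \<in> p} n \<in> q}"
      by (simp add: shift_shift shift_set_def add.assoc)
    then show ?thesis by (simp add: uf_add_mem)
  qed
  then show ?thesis by blast
qed

section \<open>Closed sets of ultrafilters\<close>

definition closedU :: "nat set set set \<Rightarrow> bool" where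
  "closedU X \<longleftrightarrow> (\<forall>x\<in>X. is_ultrafilter x) \<and> (\<forall>p. is_ultrafilter p \<longrightarrow> (\<forall>A\<in>p. \<exists>q\<in>X. A \<in> q) \<longrightarrow> p \<in> X)"

lemma closedU_uf: "closedU X \<Longrightarrow> x \<in> X \<Longrightarrow> is_ultrafilter x"
  by (simp add: closedU_def)

lemma closedU_Inter:
  assumes "\<F> \<noteq> {}" "\<forall>C\<in>\<F>. closedU C"
  shows "closedU (\<Inter>\<F>)"
  unfolding closedU_def
proof (intro conjI allI impI ballI)
  fix x assume "x \<in> \<Inter>\<F>"
  then obtain C where "C \<in> \<F>" "x \<in> C" using assms(1) by blast
  then show "is_ultrafilter x" using assms(2) closedU_uf by blast
next
  fix p assume p: "is_ultrafilter p" and h: "\<forall>A\<in>p. \<exists>q\<in>\<Inter>\<F>. A \<in> q"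
  show "p \<in> \<Inter>\<F>"
  proof (rule InterI)
  fix C assume C: "C \<in> \<F>"
  have "\<forall>A\<in>p. \<exists>q\<in>C. A \<in> q"
  proof
    fix A assume "A \<in> p"
    then obtain q where "q \<in> \<Inter>\<F>" "A \<in> q" using h by blast
    then show "\<exists>q\<in>C. A \<in> q" using C by blast
  qed
  then show "p \<in> C" using assms(2) C p unfolding closedU_def by blast
  qed
qed

lemma closedU_Int: "closedU A \<Longrightarrow> closedU B \<Longrightarrow> closedU (A \<inter> B)"
  using closedU_Inter[of "{A, B}"] by simp

lemma closedU_basic: "closedU {p. is_ultrafilter p \<and> (\<forall>A\<in>\<B>. A \<in> p)}"
  unfolding closedU_def
proof (intro conjI allI impI ballI)
  fix p assume p: "is_ultrafilter p" and h: "\<forall>A\<in>p. \<exists>q\<in>{p. is_ultrafilter p \<and> (\<forall>A\<in>\<B>. A \<in> p)}. A \<in> q"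
  have "\<forall>A\<in>\<B>. A \<in> p"
  proof
    fix A assume "A \<in> \<B>"
    show "A \<in> p"
    proof (rule ccontr)
      assume "A \<notin> p"
      then have "- A \<in> p" using uf_Compl[OF p] by simp
      then obtain q where "is_ultrafilter q" "\<forall>A\<in>\<B>. A \<in> q" "- A \<in> q" using h by blast
      then show False using \<open>A \<in> \<B>\<close> uf_Compl by blast
    qed
  qed
  then show "p \<in> {p. is_ultrafilter p \<and> (\<forall>A\<in>\<B>. A \<in> p)}" using p by simp
qed auto

lemma compactU:
  assumes ne: "\<F> \<noteq> {}" and cl: "\<forall>C\<in>\<F>. closedU C \<and> C \<noteq> {}"
    and dir: "\<forall>C1\<in>\<F>. \<forall>C2\<in>\<F>. \<exists>C3\<in>\<F>. C3 \<subseteq> C1 \<inter> C2"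
  shows "\<exists>p. \<forall>C\<in>\<F>. p \<in> C"
proof -
  have ufC: "is_ultrafilter q" if "C \<in> \<F>" "q \<in> C" for C q
    using cl that closedU_uf by blast
  define \<B> where "\<B> = {A. \<exists>C\<in>\<F>. \<forall>q\<in>C. A \<in> q}"
  have "\<exists>p. is_ultrafilter p \<and> \<B> \<subseteq> p"
  proof (rule ultrafilter_exists)
    show "\<forall>A\<in>\<B>. \<forall>C\<in>\<B>. \<exists>D\<in>\<B>. D \<subseteq> A \<inter> C"
    proof (intro ballI)
      fix A B assume "A \<in> \<B>" "B \<in> \<B>"
      then obtain C1 C2 where C12: "C1 \<in> \<F>" "C2 \<in> \<F>" "\<forall>q\<in>C1. A \<in> q" "\<forall>q\<in>C2. B \<in> q"
        unfolding \<B>_def by blast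
      obtain C3 where C3: "C3 \<in> \<F>" "C3 \<subseteq> C1 \<inter> C2" using dir C12(1,2) by blast
      have "\<forall>q\<in>C3. A \<inter> B \<in> q"
      proof
        fix q assume "q \<in> C3"
        then have "A \<in> q" "B \<in> q" "is_ultrafilter q" using C3 C12 ufC by auto
        then show "A \<inter> B \<in> q" using uf_Int by blast
      qed
      then have "A \<inter> B \<in> \<B>" unfolding \<B>_def using C3(1) by blast
      then show "\<exists>D\<in>\<B>. D \<subseteq> A \<inter> B" by blast
    qed
    show "{} \<notin> \<B>"
    proof
      assume "{} \<in> \<B>"
      then obtain C where C: "C \<in> \<F>" "\<forall>q\<in>C. {} \<in> q" unfolding \<B>_def by blast
      obtain q where "q \<in> C" using cl C(1) by blast
      then show False using C ufC uf_empty by blast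
    qed
  qed
  then obtain p where p: "is_ultrafilter p" "\<B> \<subseteq> p" by blast
  have "p \<in> C" if C: "C \<in> \<F>" for C
  proof -
    have "\<exists>q\<in>C. A \<in> q" if "A \<in> p" for A
    proof (rule ccontr)
      assume "\<not> (\<exists>q\<in>C. A \<in> q)"
      then have "\<forall>q\<in>C. - A \<in> q" using C ufC uf_Compl by blast
      then have "- A \<in> \<B>" unfolding \<B>_def using C by blast
      then have "- A \<in> p" using p(2) by blast
      then show False using that uf_Compl[OF p(1)] by blast
    qed
    moreover have "closedU C" using cl C by blast
    ultimately show ?thesis using p(1) unfolding closedU_def by blast
  qed
  then show ?thesis by blast
qed

lemma closedU_image:
  assumes e: "is_ultrafilter e" and T: "closedU T"
  shows "closedU ((\<lambda>t. e \<oplus>\<^sub>\<beta> t) ` T)"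
  unfolding closedU_def
proof (intro conjI allI impI ballI)
  fix x assume "x \<in> (\<lambda>t. e \<oplus>\<^sub>\<beta> t) ` T"
  then obtain t where "t \<in> T" "x = e \<oplus>\<^sub>\<beta> t" by blast
  then show "is_ultrafilter x" using uf_add_uf[OF e closedU_uf[OF T]] by simp
next
  fix q assume q: "is_ultrafilter q" and h: "\<forall>A\<in>q. \<exists>x\<in>(\<lambda>t. e \<oplus>\<^sub>\<beta> t) ` T. A \<in> x"
  define G where "G A = {n. shift_set A n \<in> e}" for A
  have GI: "G (A \<inter> B) = G A \<inter> G B" for A B unfolding G_def using uf_Int[OF e] by auto
  define H where "H A = T \<inter> {t. is_ultrafilter t \<and> (\<forall>B\<in>{G A}. B \<in> t)}" for A
  have Hmem: "t \<in> H A \<longleftrightarrow> t \<in> T \<and> G A \<in> t" for t A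
    unfolding H_def using closedU_uf[OF T] by auto
  define \<F> where "\<F> = H ` q"
  have "\<exists>t. \<forall>C\<in>\<F>. t \<in> C"
  proof (rule compactU)
    show "\<F> \<noteq> {}" unfolding \<F>_def using uf_UNIV[OF q] by blast
    show "\<forall>C\<in>\<F>. closedU C \<and> C \<noteq> {}"
    proof
      fix C assume "C \<in> \<F>"
      then obtain A where A: "A \<in> q" "C = H A" unfolding \<F>_def by blast
      have "closedU C" unfolding A(2) H_def using closedU_Int[OF T closedU_basic[of "{G A}"]] .
      moreover obtain x where "x \<in> (\<lambda>t. e \<oplus>\<^sub>\<beta> t) ` T" "A \<in> x" using h A(1) by blast
      then obtain t where "t \<in> T" "A \<in> e \<oplus>\<^sub>\<beta> t" by blast
      then have "t \<in> C" unfolding A(2) Hmem G_def uf_add_mem by simp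
      ultimately show "closedU C \<and> C \<noteq> {}" by blast
    qed
    show "\<forall>C1\<in>\<F>. \<forall>C2\<in>\<F>. \<exists>C3\<in>\<F>. C3 \<subseteq> C1 \<inter> C2"
    proof (intro ballI)
      fix C1 C2 assume "C1 \<in> \<F>" "C2 \<in> \<F>"
      then obtain A1 A2 where A12: "A1 \<in> q" "A2 \<in> q" "C1 = H A1" "C2 = H A2"
        unfolding \<F>_def by blast
      then have "A1 \<inter> A2 \<in> q" using uf_Int[OF q] by simp
      moreover have "H (A1 \<inter> A2) \<subseteq> C1 \<inter> C2"
      proof
        fix t assume "t \<in> H (A1 \<inter> A2)"
        then have "t \<in> T" "G A1 \<inter> G A2 \<in> t" unfolding Hmem GI by auto
        moreover have "is_ultrafilter t" using closedU_uf[OF T \<open>t \<in> T\<close>] .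
        ultimately have "G A1 \<in> t" "G A2 \<in> t" using uf_Int by blast+
        then show "t \<in> C1 \<inter> C2" unfolding A12(3,4) using Hmem \<open>t \<in> T\<close> by blast
      qed
      ultimately show "\<exists>C3\<in>\<F>. C3 \<subseteq> C1 \<inter> C2" unfolding \<F>_def by blast
    qed
  qed
  then obtain t where t: "\<forall>C\<in>\<F>. t \<in> C" by blast
  have tH: "t \<in> H A" if "A \<in> q" for A using t that unfolding \<F>_def by blast
  have "t \<in> T" using tH[OF uf_UNIV[OF q]] unfolding Hmem by simp
  have "q \<subseteq> e \<oplus>\<^sub>\<beta> t"
  proof
    fix A assume "A \<in> q"
    then have "G A \<in> t" using tH unfolding Hmem by blast
    then show "A \<in> e \<oplus>\<^sub>\<beta> t" unfolding G_def uf_add_mem .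
  qed
  then have "q = e \<oplus>\<^sub>\<beta> t" using uf_eq[OF q uf_add_uf[OF e closedU_uf[OF T \<open>t \<in> T\<close>]]] by simp
  then show "q \<in> (\<lambda>t. e \<oplus>\<^sub>\<beta> t) ` T" using \<open>t \<in> T\<close> by blast
qed

lemma chain_Inter_nonempty:
  assumes "\<C> \<noteq> {}" "\<forall>C\<in>\<C>. closedU C \<and> C \<noteq> {}" "\<forall>X\<in>\<C>. \<forall>Y\<in>\<C>. X \<subseteq> Y \<or> Y \<subseteq> X"
  shows "\<Inter>\<C> \<noteq> {}"
proof -
  have "\<exists>p. \<forall>C\<in>\<C>. p \<in> C"
  proof (rule compactU[OF assms(1,2)])
    show "\<forall>C1\<in>\<C>. \<forall>C2\<in>\<C>. \<exists>C3\<in>\<C>. C3 \<subseteq> C1 \<inter> C2"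
    proof (intro ballI)
      fix C1 C2 assume "C1 \<in> \<C>" "C2 \<in> \<C>"
      then have "C1 \<subseteq> C2 \<or> C2 \<subseteq> C1" using assms(3) by blast
      then show "\<exists>C3\<in>\<C>. C3 \<subseteq> C1 \<inter> C2"
      proof
        assume "C1 \<subseteq> C2" then show ?thesis using \<open>C1 \<in> \<C>\<close> by blast
      next
        assume "C2 \<subseteq> C1" then show ?thesis using \<open>C2 \<in> \<C>\<close> by blast
      qed
    qed
  qed
  then show ?thesis by blast
qed

section \<open>Ellis's lemma\<close>

lemma ellis:
  assumes S: "S \<noteq> {}" "closedU S" "\<forall>x\<in>S. \<forall>y\<in>S. x \<oplus>\<^sub>\<beta> y \<in> S"
  shows "\<exists>e\<in>S. e \<oplus>\<^sub>\<beta> e = e"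
proof -
  define \<A> where "\<A> = {T. T \<subseteq> S \<and> T \<noteq> {} \<and> closedU T \<and> (\<forall>x\<in>T. \<forall>y\<in>T. x \<oplus>\<^sub>\<beta> y \<in> T)}"
  have "\<exists>M\<in>\<A>. \<forall>X\<in>\<A>. X \<subseteq> M \<longrightarrow> X = M"
  proof (rule min_Zorn)
    show "\<A> \<noteq> {}" using S unfolding \<A>_def by blast
  next
    fix \<C> assume C: "\<C> \<noteq> {}" "\<C> \<subseteq> \<A>" "\<forall>X\<in>\<C>. \<forall>Y\<in>\<C>. X \<subseteq> Y \<or> Y \<subseteq> X"
    have "\<Inter>\<C> \<noteq> {}" using chain_Inter_nonempty[OF C(1) _ C(3)] C(2) unfolding \<A>_def by blast
    moreover have "closedU (\<Inter>\<C>)" using closedU_Inter[OF C(1)] C(2) unfolding \<A>_def by blast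
    moreover have "\<Inter>\<C> \<subseteq> S" using C(1,2) unfolding \<A>_def by blast
    moreover have "\<forall>x\<in>\<Inter>\<C>. \<forall>y\<in>\<Inter>\<C>. x \<oplus>\<^sub>\<beta> y \<in> \<Inter>\<C>" using C(2) unfolding \<A>_def by blast
    ultimately show "\<Inter>\<C> \<in> \<A>" unfolding \<A>_def by blast
  qed
  then obtain T where T: "T \<subseteq> S" "T \<noteq> {}" "closedU T" "\<forall>x\<in>T. \<forall>y\<in>T. x \<oplus>\<^sub>\<beta> y \<in> T"
    and min: "\<forall>X\<in>\<A>. X \<subseteq> T \<longrightarrow> X = T" unfolding \<A>_def by blast
  obtain e where e: "e \<in> T" using T(2) by blast
  have eu: "is_ultrafilter e" using closedU_uf[OF T(3) e] .
  have "(\<lambda>t. e \<oplus>\<^sub>\<beta> t) ` T \<in> \<A>"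
    unfolding \<A>_def
  proof (intro CollectI conjI)
    show "(\<lambda>t. e \<oplus>\<^sub>\<beta> t) ` T \<subseteq> S" using T(1,4) e by blast
    show "(\<lambda>t. e \<oplus>\<^sub>\<beta> t) ` T \<noteq> {}" using T(2) by blast
    show "closedU ((\<lambda>t. e \<oplus>\<^sub>\<beta> t) ` T)" using closedU_image[OF eu T(3)] .
    show "\<forall>x\<in>(\<lambda>t. e \<oplus>\<^sub>\<beta> t) ` T. \<forall>y\<in>(\<lambda>t. e \<oplus>\<^sub>\<beta> t) ` T. x \<oplus>\<^sub>\<beta> y \<in> (\<lambda>t. e \<oplus>\<^sub>\<beta> t) ` T"
    proof (intro ballI)
      fix x y assume "x \<in> (\<lambda>t. e \<oplus>\<^sub>\<beta> t) ` T" "y \<in> (\<lambda>t. e \<oplus>\<^sub>\<beta> t) ` T"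
      then obtain t t' where "t \<in> T" "t' \<in> T" "x = e \<oplus>\<^sub>\<beta> t" "y = e \<oplus>\<^sub>\<beta> t'" by blast
      then have "x \<oplus>\<^sub>\<beta> y = e \<oplus>\<^sub>\<beta> (t \<oplus>\<^sub>\<beta> (e \<oplus>\<^sub>\<beta> t'))" by (simp add: uf_add_assoc)
      moreover have "t \<oplus>\<^sub>\<beta> (e \<oplus>\<^sub>\<beta> t') \<in> T" using T(4) \<open>t \<in> T\<close> \<open>t' \<in> T\<close> e by blast
      ultimately show "x \<oplus>\<^sub>\<beta> y \<in> (\<lambda>t. e \<oplus>\<^sub>\<beta> t) ` T" by blast
    qed
  qed
  moreover have "(\<lambda>t. e \<oplus>\<^sub>\<beta> t) ` T \<subseteq> T" using T(4) e by blast
  ultimately have img: "(\<lambda>t. e \<oplus>\<^sub>\<beta> t) ` T = T" using min by blast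
  define Z where "Z = T \<inter> {t. is_ultrafilter t \<and> (\<forall>B\<in>{{n. shift_set A n \<in> e} | A. A \<in> e}. B \<in> t)}"
  have Zeq: "t \<in> Z \<longleftrightarrow> t \<in> T \<and> e \<oplus>\<^sub>\<beta> t = e" for t
  proof
    assume "t \<in> Z"
    then have tT: "t \<in> T" and hh: "\<forall>B\<in>{{n. shift_set A n \<in> e} | A. A \<in> e}. B \<in> t"
      unfolding Z_def by auto
    have "e \<subseteq> e \<oplus>\<^sub>\<beta> t"
    proof
      fix A assume "A \<in> e"
      then have "{n. shift_set A n \<in> e} \<in> t" using hh by blast
      then show "A \<in> e \<oplus>\<^sub>\<beta> t" unfolding uf_add_mem .
    qed
    have "e = e \<oplus>\<^sub>\<beta> t"
      using uf_eq[OF eu uf_add_uf[OF eu closedU_uf[OF T(3) tT]] \<open>e \<subseteq> e \<oplus>\<^sub>\<beta> t\<close>] .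
    then show "t \<in> T \<and> e \<oplus>\<^sub>\<beta> t = e" using tT by simp
  next
    assume a: "t \<in> T \<and> e \<oplus>\<^sub>\<beta> t = e"
    then have ut: "is_ultrafilter t" using closedU_uf[OF T(3)] by blast
    have "\<forall>B\<in>{{n. shift_set A n \<in> e} | A. A \<in> e}. B \<in> t"
    proof
      fix B assume "B \<in> {{n. shift_set A n \<in> e} | A. A \<in> e}"
      then obtain A where "A \<in> e" "B = {n. shift_set A n \<in> e}" by blast
      then have "A \<in> e \<oplus>\<^sub>\<beta> t" using a by simp
      then show "B \<in> t" unfolding uf_add_mem \<open>B = _\<close> .
    qed
    then show "t \<in> Z" unfolding Z_def using a ut by blast
  qed
  have "Z \<in> \<A>"
    unfolding \<A>_def
  proof (intro CollectI conjI)
    show "Z \<subseteq> S" using Zeq T(1) by blast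
    obtain t where "t \<in> T" "e = e \<oplus>\<^sub>\<beta> t" using img e by (metis imageE)
    then show "Z \<noteq> {}" using Zeq by auto
    show "closedU Z" unfolding Z_def using closedU_Int[OF T(3) closedU_basic] .
    show "\<forall>x\<in>Z. \<forall>y\<in>Z. x \<oplus>\<^sub>\<beta> y \<in> Z"
    proof (intro ballI)
      fix x y assume "x \<in> Z" "y \<in> Z"
      then have "x \<in> T" "y \<in> T" "e \<oplus>\<^sub>\<beta> x = e" "e \<oplus>\<^sub>\<beta> y = e" using Zeq by auto
      then have "x \<oplus>\<^sub>\<beta> y \<in> T" "e \<oplus>\<^sub>\<beta> (x \<oplus>\<^sub>\<beta> y) = e" using T(4)
        by (auto simp flip: uf_add_assoc)
      then show "x \<oplus>\<^sub>\<beta> y \<in> Z" using Zeq by blast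
    qed
  qed
  moreover have "Z \<subseteq> T" using Zeq by blast
  ultimately have "Z = T" using min by blast
  then have "e \<oplus>\<^sub>\<beta> e = e" using Zeq e by blast
  then show ?thesis using e T(1) by blast
qed



section \<open>Ultrafilter limits of words\<close>

definition ulim :: "nat set set \<Rightarrow> (nat \<Rightarrow> 'a) \<Rightarrow> nat \<Rightarrow> 'a" where
  "ulim p v i = (SOME a. {n. v (n + i) = a} \<in> p)"

lemma ulim_ex:
  assumes p: "is_ultrafilter p" and f: "finite (range v)"
  shows "\<exists>a. {n. v (n + i) = a} \<in> p"
proof -
  have "(\<Union>a\<in>range v. {n. v (n + i) = a}) = UNIV" by auto
  then have "(\<Union>a\<in>range v. {n. v (n + i) = a}) \<in> p" using uf_UNIV[OF p] by simp
  then show ?thesis using uf_finite_Union[OF p f] by blast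
qed

lemma ulim_mem:
  assumes "is_ultrafilter p" "finite (range v)"
  shows "{n. v (n + i) = ulim p v i} \<in> p"
  unfolding ulim_def using someI_ex[OF ulim_ex[OF assms]] .

lemma ulim_unique:
  assumes p: "is_ultrafilter p" and f: "finite (range v)" and a: "{n. v (n + i) = a} \<in> p"
  shows "ulim p v i = a"
proof (rule ccontr)
  assume ne: "ulim p v i \<noteq> a"
  have "{n. v (n + i) = a} \<inter> {n. v (n + i) = ulim p v i} \<in> p"
    using uf_Int[OF p] a ulim_mem[OF p f] by blast
  moreover have "{n. v (n + i) = a} \<inter> {n. v (n + i) = ulim p v i} = {}" using ne by auto
  ultimately show False using uf_empty[OF p] by simp
qed

lemma ulim_iff:
  assumes p: "is_ultrafilter p" and f: "finite (range v)"
  shows "{n. v (n + i) = a} \<in> p \<longleftrightarrow> ulim p v i = a"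
  using ulim_unique[OF p f] ulim_mem[OF p f] by blast

lemma ulim_range:
  assumes p: "is_ultrafilter p" and f: "finite (range v)"
  shows "range (ulim p v) \<subseteq> range v"
proof
  fix b assume "b \<in> range (ulim p v)"
  then obtain i where "b = ulim p v i" by blast
  then have "{n. v (n + i) = b} \<in> p" using ulim_mem[OF p f] by simp
  then have "{n. v (n + i) = b} \<noteq> {}" using uf_nonempty[OF p] by blast
  then show "b \<in> range v" by auto
qed

lemma ulim_finite:
  assumes "is_ultrafilter p" "finite (range v)"
  shows "finite (range (ulim p v))"
  using finite_subset[OF ulim_range[OF assms] assms(2)] .

lemma ulim_add:
  assumes p: "is_ultrafilter p" and q: "is_ultrafilter q" and f: "finite (range v)"
  shows "ulim (p \<oplus>\<^sub>\<beta> q) v = ulim q (ulim p v)"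
proof
  fix i
  define b where "b = ulim q (ulim p v) i"
  have fp: "finite (range (ulim p v))" using ulim_finite[OF p f] .
  have "{m. shift_set {n. v (n + i) = b} m \<in> p} = {m. ulim p v (m + i) = b}"
  proof -
    have "shift_set {n. v (n + i) = b} m = {n. v (n + (m + i)) = b}" for m
      by (simp add: shift_set_def add.assoc)
    then show ?thesis using ulim_iff[OF p f] by simp
  qed
  moreover have "{m. ulim p v (m + i) = b} \<in> q" unfolding b_def using ulim_mem[OF q fp] .
  ultimately have "{n. v (n + i) = b} \<in> p \<oplus>\<^sub>\<beta> q" unfolding uf_add_mem by simp
  then show "ulim (p \<oplus>\<^sub>\<beta> q) v i = ulim q (ulim p v) i"
    unfolding b_def using ulim_unique[OF uf_add_uf[OF p q] f] by simp
qed

lemma occ_eq: "occurrences v u = (\<Inter>i\<in>{..<length u}. {n. v (n + i) = u ! i})"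
  unfolding occurrences_def by auto

lemma ulim_occ:
  assumes p: "is_ultrafilter p" and f: "finite (range v)"
  shows "occurrences v u \<in> p \<longleftrightarrow> (\<forall>i<length u. ulim p v i = u ! i)"
proof
  assume a: "occurrences v u \<in> p"
  show "\<forall>i<length u. ulim p v i = u ! i"
  proof (intro allI impI)
    fix i assume "i < length u"
    then have "occurrences v u \<subseteq> {n. v (n + i) = u ! i}" unfolding occurrences_def by auto
    then have "{n. v (n + i) = u ! i} \<in> p" using uf_mono[OF p a] by blast
    then show "ulim p v i = u ! i" using ulim_unique[OF p f] by blast
  qed
next
  assume a: "\<forall>i<length u. ulim p v i = u ! i"
  have "\<forall>i\<in>{..<length u}. {n. v (n + i) = u ! i} \<in> p"
  proof
    fix i assume "i \<in> {..<length u}"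
    then have "u ! i = ulim p v i" using a by simp
    then show "{n. v (n + i) = u ! i} \<in> p" using ulim_mem[OF p f, of i] by simp
  qed
  then show "occurrences v u \<in> p" unfolding occ_eq
    using uf_finite_Inter[OF p finite_lessThan, where X="\<lambda>i. {n. v (n + i) = u ! i}"] by simp
qed

lemma ulim_window:
  assumes p: "is_ultrafilter p" and f: "finite (range v)"
  shows "\<exists>k. \<forall>j<N. v (k + j) = ulim p v j"
proof -
  have "(\<Inter>j\<in>{..<N}. {n. v (n + j) = ulim p v j}) \<in> p"
    using uf_finite_Inter[OF p finite_lessThan, where X="\<lambda>j. {n. v (n + j) = ulim p v j}"] ulim_mem[OF p f] by simp
  then have "(\<Inter>j\<in>{..<N}. {n. v (n + j) = ulim p v j}) \<noteq> {}" using uf_nonempty[OF p] by blast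
  then obtain k where "k \<in> (\<Inter>j\<in>{..<N}. {n. v (n + j) = ulim p v j})"
    by blast
  then show ?thesis by auto
qed

section \<open>Return to a point of a uniformly recurrent orbit closure\<close>

lemma ur_return:
  assumes f: "finite (range w)" and ur: "uniformly_recurrent w"
    and p: "is_ultrafilter p" and r: "is_ultrafilter r"
  shows "\<exists>s. is_ultrafilter s \<and> ulim s (ulim r w) = ulim p w"
proof -
  define y where "y = ulim p w"
  define z where "z = ulim r w"
  define S where "S L = {n. \<forall>i<L. z (n + i) = y i}" for L
  have Smono: "L \<le> L' \<Longrightarrow> S L' \<subseteq> S L" for L L' unfolding S_def by auto
  have Sne: "S L \<noteq> {}" for L
  proof (cases "L = 0")
    case True then show ?thesis unfolding S_def by auto
  next
    case False
    define u' where "u' = map y [0..<L]"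
    have lu: "length u' = L" unfolding u'_def by simp
    have ui: "u' ! i = y i" if "i < L" for i unfolding u'_def using that by simp
    have occ: "n \<in> occurrences w u' \<longleftrightarrow> (\<forall>i<L. w (n + i) = y i)" for n
      unfolding occurrences_def lu using ui by auto
    obtain k where k: "\<forall>j<L. w (k + j) = ulim p w j" using ulim_window[OF p f, of L] by blast
    have "k \<in> occurrences w u'" unfolding occ using k unfolding y_def by blast
    then have "is_factor w u'" unfolding is_factor_def using False lu by auto
    then have "bounded_gaps (occurrences w u')" using ur unfolding uniformly_recurrent_def by blast
    then obtain g where g: "\<forall>n. \<exists>m\<in>occurrences w u'. n \<le> m \<and> m < n + g"
      unfolding bounded_gaps_def by blast
    obtain k' where k': "\<forall>j<g + L. w (k' + j) = ulim r w j" using ulim_window[OF r f, of "g + L"] by blast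
    obtain m where m: "m \<in> occurrences w u'" "k' \<le> m" "m < k' + g" using g by blast
    have "m - k' \<in> S L"
      unfolding S_def
    proof (intro CollectI allI impI)
      fix i assume "i < L"
      have lt: "m - k' + i < g + L" using m(3) \<open>i < L\<close> by linarith
      have eq: "k' + (m - k' + i) = m + i" using m(2) by linarith
      have "z (m - k' + i) = w (k' + (m - k' + i))" using k' lt unfolding z_def by simp
      also have "\<dots> = w (m + i)" using eq by simp
      also have "\<dots> = y i" using m(1) \<open>i < L\<close> unfolding occ by simp
      finally show "z (m - k' + i) = y i" .
    qed
    then show ?thesis by blast
  qed
  have "\<exists>s. is_ultrafilter s \<and> range S \<subseteq> s"
  proof (rule ultrafilter_exists)
    show "\<forall>A\<in>range S. \<forall>C\<in>range S. \<exists>D\<in>range S. D \<subseteq> A \<inter> C"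
    proof (intro ballI)
      fix A C assume "A \<in> range S" "C \<in> range S"
      then obtain L L' where "A = S L" "C = S L'" by blast
      then have "S (max L L') \<subseteq> A \<inter> C" using Smono by simp
      then show "\<exists>D\<in>range S. D \<subseteq> A \<inter> C" by blast
    qed
    show "{} \<notin> range S"
    proof
      assume "{} \<in> range S"
      then obtain L where "{} = S L" by blast
      then show False using Sne[of L] by simp
    qed
  qed
  then obtain s where s: "is_ultrafilter s" "range S \<subseteq> s" by blast
  have fz: "finite (range z)" unfolding z_def using ulim_finite[OF r f] .
  have "ulim s z i = y i" for i
  proof -
    have "S (Suc i) \<in> s" using s by blast
    moreover have "S (Suc i) \<subseteq> {n. z (n + i) = y i}" unfolding S_def by auto
    ultimately have "{n. z (n + i) = y i} \<in> s" using uf_mono[OF s(1)] by blast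
    then show ?thesis using ulim_unique[OF s(1) fz] by blast
  qed
  then show ?thesis using s(1) unfolding y_def z_def by blast
qed



lemma closedU_betaN: "closedU {p. is_ultrafilter p}"
  using closedU_basic[of "{}"] by simp

lemma nonprinc_add:
  assumes p: "is_ultrafilter p" and np: "\<not> principal p" and t: "is_ultrafilter t"
  shows "\<not> principal (p \<oplus>\<^sub>\<beta> t)"
proof
  assume "principal (p \<oplus>\<^sub>\<beta> t)"
  then obtain k where "{k} \<in> p \<oplus>\<^sub>\<beta> t" unfolding principal_def by blast
  then have h: "{n. shift_set {k} n \<in> p} \<in> t" unfolding uf_add_mem .
  have "shift_set {k} n \<notin> p" for n
  proof -
    have "shift_set {k} n \<subseteq> {..k}" unfolding shift_set_def by auto
    then have "finite (shift_set {k} n)" using finite_subset by blast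
    then show ?thesis using uf_finite_notin[OF p np] by blast
  qed
  then have "{n. shift_set {k} n \<in> p} = {}" by blast
  then show False using h uf_empty[OF t] by simp
qed

definition rideal :: "nat set set set \<Rightarrow> bool" where
  "rideal X \<longleftrightarrow> (\<forall>x\<in>X. \<forall>t. is_ultrafilter t \<longrightarrow> x \<oplus>\<^sub>\<beta> t \<in> X)"

lemma central_of_idem:
  assumes f: "finite (range w)" and ur: "uniformly_recurrent w"
    and p: "is_ultrafilter p" and np: "\<not> principal p" and idem: "p \<oplus>\<^sub>\<beta> p = p"
    and A: "occurrences w u \<in> p"
  shows "central (occurrences w u)"
proof -
  define y where "y = ulim p w"
  have fy: "finite (range y)" unfolding y_def using ulim_finite[OF p f] .
  have yy: "ulim p y = y" unfolding y_def using ulim_add[OF p p f] idem by simp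
  define R0 where "R0 = (\<lambda>t. p \<oplus>\<^sub>\<beta> t) ` {t. is_ultrafilter t}"
  define \<A> where "\<A> = {X. X \<subseteq> R0 \<and> X \<noteq> {} \<and> closedU X \<and> rideal X}"
  have R0A: "R0 \<in> \<A>"
    unfolding \<A>_def
  proof (intro CollectI conjI)
    show "R0 \<subseteq> R0" by simp
    show "R0 \<noteq> {}" unfolding R0_def using p by blast
    show "closedU R0" unfolding R0_def using closedU_image[OF p closedU_betaN] .
    show "rideal R0" unfolding rideal_def
    proof (intro ballI allI impI)
      fix x t assume "x \<in> R0" "is_ultrafilter t"
      then obtain t0 where t0: "is_ultrafilter t0" "x = p \<oplus>\<^sub>\<beta> t0" unfolding R0_def by blast
      then have "x \<oplus>\<^sub>\<beta> t = p \<oplus>\<^sub>\<beta> (t0 \<oplus>\<^sub>\<beta> t)" by (simp add: uf_add_assoc)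
      moreover have "is_ultrafilter (t0 \<oplus>\<^sub>\<beta> t)" using uf_add_uf t0(1) \<open>is_ultrafilter t\<close> by blast
      ultimately show "x \<oplus>\<^sub>\<beta> t \<in> R0" unfolding R0_def by blast
    qed
  qed
  have "\<exists>M\<in>\<A>. \<forall>X\<in>\<A>. X \<subseteq> M \<longrightarrow> X = M"
  proof (rule min_Zorn)
    show "\<A> \<noteq> {}" using R0A by blast
  next
    fix \<C> assume C: "\<C> \<noteq> {}" "\<C> \<subseteq> \<A>" "\<forall>X\<in>\<C>. \<forall>Y\<in>\<C>. X \<subseteq> Y \<or> Y \<subseteq> X"
    have "\<forall>X\<in>\<C>. closedU X \<and> X \<noteq> {}" using C(2) unfolding \<A>_def by blast
    then have "\<Inter>\<C> \<noteq> {}" using chain_Inter_nonempty[OF C(1) _ C(3)] by blast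
    moreover have "closedU (\<Inter>\<C>)" using closedU_Inter[OF C(1)] C(2) unfolding \<A>_def by blast
    moreover have "\<Inter>\<C> \<subseteq> R0" using C(1,2) unfolding \<A>_def by blast
    moreover have "rideal (\<Inter>\<C>)" using C(2) unfolding \<A>_def rideal_def by blast
    ultimately show "\<Inter>\<C> \<in> \<A>" unfolding \<A>_def by blast
  qed
  then obtain R where R: "R \<subseteq> R0" "R \<noteq> {}" "closedU R" "rideal R"
    and Rmin: "\<forall>X\<in>\<A>. X \<subseteq> R \<longrightarrow> X = R" unfolding \<A>_def by blast
  have Ruf: "is_ultrafilter x" if "x \<in> R" for x using closedU_uf[OF R(3) that] .
  have Rgen: "(\<lambda>t. x \<oplus>\<^sub>\<beta> t) ` {t. is_ultrafilter t} = R" if x: "x \<in> R" for x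
  proof -
    have sub: "(\<lambda>t. x \<oplus>\<^sub>\<beta> t) ` {t. is_ultrafilter t} \<subseteq> R"
      using R(4) x unfolding rideal_def by blast
    have "(\<lambda>t. x \<oplus>\<^sub>\<beta> t) ` {t. is_ultrafilter t} \<in> \<A>"
      unfolding \<A>_def
    proof (intro CollectI conjI)
      show "(\<lambda>t. x \<oplus>\<^sub>\<beta> t) ` {t. is_ultrafilter t} \<subseteq> R0" using sub R(1) by blast
      show "(\<lambda>t. x \<oplus>\<^sub>\<beta> t) ` {t. is_ultrafilter t} \<noteq> {}" using p by blast
      show "closedU ((\<lambda>t. x \<oplus>\<^sub>\<beta> t) ` {t. is_ultrafilter t})"
        using closedU_image[OF Ruf[OF x] closedU_betaN] .
      show "rideal ((\<lambda>t. x \<oplus>\<^sub>\<beta> t) ` {t. is_ultrafilter t})" unfolding rideal_def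
      proof (intro ballI allI impI)
        fix z t assume "z \<in> (\<lambda>t. x \<oplus>\<^sub>\<beta> t) ` {t. is_ultrafilter t}" "is_ultrafilter t"
        then obtain t0 where t0: "is_ultrafilter t0" "z = x \<oplus>\<^sub>\<beta> t0" by blast
        then have "z \<oplus>\<^sub>\<beta> t = x \<oplus>\<^sub>\<beta> (t0 \<oplus>\<^sub>\<beta> t)" by (simp add: uf_add_assoc)
        moreover have "is_ultrafilter (t0 \<oplus>\<^sub>\<beta> t)" using uf_add_uf t0(1) \<open>is_ultrafilter t\<close> by blast
        ultimately show "z \<oplus>\<^sub>\<beta> t \<in> (\<lambda>t. x \<oplus>\<^sub>\<beta> t) ` {t. is_ultrafilter t}" by blast
      qed
    qed
    then show ?thesis using Rmin sub by blast
  qed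
  have RK: "R \<subseteq> K_betaN"
    unfolding K_betaN_def
  proof (rule Inter_greatest)
    fix I assume "I \<in> {I. two_sided_ideal I}"
    then have I: "I \<noteq> {}" "I \<subseteq> betaN" "\<forall>p\<in>betaN. \<forall>q\<in>I. p \<oplus>\<^sub>\<beta> q \<in> I \<and> q \<oplus>\<^sub>\<beta> p \<in> I"
      unfolding two_sided_ideal_def by auto
    obtain i where i: "i \<in> I" using I(1) by blast
    obtain x where x: "x \<in> R" using R(2) by blast
    have iu: "is_ultrafilter i" using I(2) i unfolding betaN_def by blast
    have xi: "x \<oplus>\<^sub>\<beta> i \<in> R" using R(4) x iu unfolding rideal_def by blast
    have xiI: "x \<oplus>\<^sub>\<beta> i \<in> I" using I(3) i Ruf[OF x] unfolding betaN_def by blast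
    have "(\<lambda>t. (x \<oplus>\<^sub>\<beta> i) \<oplus>\<^sub>\<beta> t) ` {t. is_ultrafilter t} \<subseteq> I"
      using I(3) xiI unfolding betaN_def by blast
    then show "R \<subseteq> I" using Rgen[OF xi] by simp
  qed
  define W where "W = {r. is_ultrafilter r \<and>
     (\<forall>B\<in>range (\<lambda>i. {n. w (n + i) = y i}) \<union> range (\<lambda>i. {n. y (n + i) = y i}). B \<in> r)}"
  have Weq: "r \<in> W \<longleftrightarrow> is_ultrafilter r \<and> ulim r w = y \<and> ulim r y = y" for r
  proof
    assume "r \<in> W"
    then have r: "is_ultrafilter r" and h1: "\<forall>i. {n. w (n + i) = y i} \<in> r" and h2: "\<forall>i. {n. y (n + i) = y i} \<in> r"
      unfolding W_def by auto
    have "ulim r w = y" using ulim_unique[OF r f] h1 by blast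
    moreover have "ulim r y = y" using ulim_unique[OF r fy] h2 by blast
    ultimately show "is_ultrafilter r \<and> ulim r w = y \<and> ulim r y = y" using r by blast
  next
    assume a: "is_ultrafilter r \<and> ulim r w = y \<and> ulim r y = y"
    then have r: "is_ultrafilter r" by blast
    have h1: "{n. w (n + i) = y i} \<in> r" for i using ulim_mem[OF r f, of i] a by simp
    have h2: "{n. y (n + i) = y i} \<in> r" for i using ulim_mem[OF r fy, of i] a by simp
    show "r \<in> W" unfolding W_def using r h1 h2 by blast
  qed
  define S where "S = W \<inter> R"
  have Seq: "r \<in> S \<longleftrightarrow> is_ultrafilter r \<and> ulim r w = y \<and> ulim r y = y \<and> r \<in> R" for r
    unfolding S_def using Weq by blast
  have "\<exists>e\<in>S. e \<oplus>\<^sub>\<beta> e = e"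
  proof (rule ellis)
    show "closedU S" unfolding S_def W_def using closedU_Int[OF closedU_basic R(3)] .
    show "\<forall>x\<in>S. \<forall>z\<in>S. x \<oplus>\<^sub>\<beta> z \<in> S"
    proof (intro ballI)
      fix x z assume "x \<in> S" "z \<in> S"
      then have xz: "is_ultrafilter x" "ulim x w = y" "ulim x y = y" "is_ultrafilter z" "ulim z w = y" "ulim z y = y"
        "x \<in> R" using Seq by auto
      have "x \<oplus>\<^sub>\<beta> z \<in> R" using R(4) xz(7) xz(4) unfolding rideal_def by blast
      moreover have "ulim (x \<oplus>\<^sub>\<beta> z) w = y" using ulim_add[OF xz(1) xz(4) f] xz by simp
      moreover have "ulim (x \<oplus>\<^sub>\<beta> z) y = y" using ulim_add[OF xz(1) xz(4) fy] xz by simp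
      moreover have "is_ultrafilter (x \<oplus>\<^sub>\<beta> z)" using uf_add_uf xz by blast
      ultimately show "x \<oplus>\<^sub>\<beta> z \<in> S" using Seq by blast
    qed
    obtain r0 where r0: "r0 \<in> R" using R(2) by blast
    then obtain t0 where t0: "is_ultrafilter t0" "r0 = p \<oplus>\<^sub>\<beta> t0" using R(1) unfolding R0_def by blast
    obtain s where s: "is_ultrafilter s" "ulim s (ulim r0 w) = y"
      using ur_return[OF f ur p Ruf[OF r0]] unfolding y_def by blast
    define r1 where "r1 = r0 \<oplus>\<^sub>\<beta> s"
    have r1R: "r1 \<in> R" using R(4) r0 s(1) unfolding rideal_def r1_def by blast
    have r1u: "is_ultrafilter r1" using Ruf[OF r1R] .
    have r1w: "ulim r1 w = y" unfolding r1_def using ulim_add[OF Ruf[OF r0] s(1) f] s(2) by simp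
    have ts: "is_ultrafilter (t0 \<oplus>\<^sub>\<beta> s)" using uf_add_uf t0(1) s(1) by blast
    have r1eq: "r1 = p \<oplus>\<^sub>\<beta> (t0 \<oplus>\<^sub>\<beta> s)" unfolding r1_def t0(2) by (simp add: uf_add_assoc)
    have "ulim r1 y = ulim (t0 \<oplus>\<^sub>\<beta> s) (ulim p y)" unfolding r1eq using ulim_add[OF p ts fy] .
    also have "\<dots> = ulim (t0 \<oplus>\<^sub>\<beta> s) (ulim p w)" using yy unfolding y_def by simp
    also have "\<dots> = ulim r1 w" unfolding r1eq using ulim_add[OF p ts f] by simp
    finally have r1y: "ulim r1 y = y" using r1w by simp
    have "r1 \<in> S" using Seq r1u r1w r1y r1R by blast
    then show "S \<noteq> {}" by blast
  qed
  then obtain e where e: "e \<in> S" "e \<oplus>\<^sub>\<beta> e = e" by blast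
  have eu: "is_ultrafilter e" and ew: "ulim e w = y" and eR: "e \<in> R" using e(1) Seq by auto
  obtain t where t: "is_ultrafilter t" "e = p \<oplus>\<^sub>\<beta> t" using eR R(1) unfolding R0_def by blast
  have enp: "\<not> principal e" using nonprinc_add[OF p np t(1)] t(2) by simp
  have "\<forall>i<length u. ulim p w i = u ! i" using ulim_occ[OF p f] A by blast
  then have "occurrences w u \<in> e" using ulim_occ[OF eu f] ew unfolding y_def by simp
  moreover have "minimal_idempotent e"
    unfolding minimal_idempotent_def idempotent_def betaN_def using eu enp e(2) eR RK by blast
  ultimately show ?thesis unfolding central_def by blast
qed

section \<open>IP sets and idempotents\<close>

definition FS :: "(nat \<Rightarrow> nat) \<Rightarrow> nat \<Rightarrow> nat set" where
  "FS x m = {(\<Sum>n\<in>F. x n) | F. finite F \<and> F \<noteq> {} \<and> F \<subseteq> {m..}}"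

lemma FS_antimono: "m \<le> m' \<Longrightarrow> FS x m' \<subseteq> FS x m"
proof
  fix a assume "m \<le> m'" "a \<in> FS x m'"
  then obtain F where "finite F" "F \<noteq> {}" "F \<subseteq> {m'..}" "a = (\<Sum>n\<in>F. x n)" unfolding FS_def by blast
  moreover have "F \<subseteq> {m..}" using calculation(3) \<open>m \<le> m'\<close> by auto
  ultimately show "a \<in> FS x m" unfolding FS_def by blast
qed

lemma FS_mem: "x m \<in> FS x m"
proof -
  have "(\<Sum>n\<in>{m}. x n) \<in> FS x m" unfolding FS_def by blast
  then show ?thesis by simp
qed

lemma FS_shift:
  assumes "n \<in> FS x m"
  shows "\<exists>k. FS x k \<subseteq> shift_set (FS x m) n"
proof -
  obtain F where F: "finite F" "F \<noteq> {}" "F \<subseteq> {m..}" "n = (\<Sum>j\<in>F. x j)"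
    using assms unfolding FS_def by blast
  define k where "k = Suc (Max F)"
  have "FS x k \<subseteq> shift_set (FS x m) n"
  proof
    fix a assume "a \<in> FS x k"
    then obtain G where G: "finite G" "G \<noteq> {}" "G \<subseteq> {k..}" "a = (\<Sum>j\<in>G. x j)"
      unfolding FS_def by blast
    have jle: "j \<le> Max F" if "j \<in> F" for j using Max_ge[OF F(1) that] .
    have disj: "F \<inter> G = {}"
    proof (rule equals0I)
      fix j assume "j \<in> F \<inter> G"
      then have "j \<le> Max F" "k \<le> j" using jle G(3) by auto
      then show False unfolding k_def by simp
    qed
    have su: "(\<Sum>j\<in>F \<union> G. x j) = (\<Sum>j\<in>F. x j) + (\<Sum>j\<in>G. x j)"
      by (rule sum.union_disjoint[OF F(1) G(1) disj])
    have "a + n = (\<Sum>j\<in>F \<union> G. x j)" unfolding su F(4) G(4) by simp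
    moreover have "F \<union> G \<subseteq> {m..}"
    proof -
      have "Max F \<in> F" using Max_in[OF F(1,2)] .
      then have "m \<le> Max F" using F(3) by auto
      then show ?thesis using F(3) G(3) unfolding k_def by auto
    qed
    ultimately have "a + n \<in> FS x m" unfolding FS_def using F(1,2) G(1) by blast
    then show "a \<in> shift_set (FS x m) n" unfolding shift_set_def by simp
  qed
  then show ?thesis by blast
qed

lemma principal_add_self:
  assumes p: "is_ultrafilter p" and n: "{n} \<in> p" and idem: "p \<oplus>\<^sub>\<beta> p = p"
  shows "n = 0"
proof -
  have "{n} \<in> p \<oplus>\<^sub>\<beta> p" using idem n by simp
  then have "{k. shift_set {n} k \<in> p} \<in> p" unfolding uf_add_mem .
  then have "n \<in> {k. shift_set {n} k \<in> p}" using uf_principal[OF p n] by blast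
  then have "shift_set {n} n \<in> p" by simp
  then have "n \<in> shift_set {n} n" using uf_principal[OF p n] by blast
  then show "n = 0" unfolding shift_set_def by simp
qed

lemma IP_idem:
  assumes "IP_set A"
  shows "\<exists>p. is_ultrafilter p \<and> \<not> principal p \<and> p \<oplus>\<^sub>\<beta> p = p \<and> A \<in> p"
proof -
  obtain x :: "nat \<Rightarrow> nat" where x: "strict_mono x" and sums: "\<forall>F. finite F \<and> F \<noteq> {} \<longrightarrow> (\<Sum>n\<in>F. x n) \<in> A"
    using assms unfolding IP_set_def by blast
  define T where "T = {q. is_ultrafilter q \<and> (\<forall>B\<in>range (FS x). B \<in> q)}"
  have "\<exists>e\<in>T. e \<oplus>\<^sub>\<beta> e = e"
  proof (rule ellis)
    show "closedU T" unfolding T_def using closedU_basic .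
    have "\<exists>q. is_ultrafilter q \<and> range (FS x) \<subseteq> q"
    proof (rule ultrafilter_exists)
      show "\<forall>A\<in>range (FS x). \<forall>C\<in>range (FS x). \<exists>D\<in>range (FS x). D \<subseteq> A \<inter> C"
      proof (intro ballI)
        fix A C assume "A \<in> range (FS x)" "C \<in> range (FS x)"
        then obtain m m' where "A = FS x m" "C = FS x m'" by blast
        then have "FS x (max m m') \<subseteq> A \<inter> C" using FS_antimono by simp
        then show "\<exists>D\<in>range (FS x). D \<subseteq> A \<inter> C" by blast
      qed
      show "{} \<notin> range (FS x)"
      proof
        assume "{} \<in> range (FS x)"
        then obtain m where "{} = FS x m" by blast
        then show False using FS_mem[of x m] by simp
      qed
    qed
    then obtain q where "is_ultrafilter q" "range (FS x) \<subseteq> q" by blast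
    then have "q \<in> T" unfolding T_def by blast
    then show "T \<noteq> {}" by blast
    show "\<forall>p\<in>T. \<forall>q\<in>T. p \<oplus>\<^sub>\<beta> q \<in> T"
    proof (intro ballI)
      fix p q assume "p \<in> T" "q \<in> T"
      then have p: "is_ultrafilter p" "\<forall>m. FS x m \<in> p" and q: "is_ultrafilter q" "\<forall>m. FS x m \<in> q"
        unfolding T_def by auto
      have "FS x m \<in> p \<oplus>\<^sub>\<beta> q" for m
      proof -
        have "FS x m \<subseteq> {n. shift_set (FS x m) n \<in> p}"
        proof
          fix n assume "n \<in> FS x m"
          then obtain k where "FS x k \<subseteq> shift_set (FS x m) n" using FS_shift by blast
          then have "shift_set (FS x m) n \<in> p" using uf_mono[OF p(1)] p(2) by blast
          then show "n \<in> {n. shift_set (FS x m) n \<in> p}" by simp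
        qed
        then have "{n. shift_set (FS x m) n \<in> p} \<in> q" using uf_mono[OF q(1)] q(2) by blast
        then show ?thesis unfolding uf_add_mem .
      qed
      then show "p \<oplus>\<^sub>\<beta> q \<in> T" unfolding T_def using uf_add_uf[OF p(1) q(1)] by blast
    qed
  qed
  then obtain e where e: "e \<in> T" "e \<oplus>\<^sub>\<beta> e = e" by blast
  have eu: "is_ultrafilter e" and eFS: "\<forall>m. FS x m \<in> e" using e(1) unfolding T_def by auto
  have "FS x 0 \<subseteq> A"
  proof
    fix a assume "a \<in> FS x 0"
    then obtain F where "finite F" "F \<noteq> {}" "a = (\<Sum>n\<in>F. x n)" unfolding FS_def by blast
    then show "a \<in> A" using sums by simp
  qed
  then have Ae: "A \<in> e" using uf_mono[OF eu] eFS by blast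
  have "\<not> principal e"
  proof
    assume "principal e"
    then obtain n where n: "{n} \<in> e" unfolding principal_def by blast
    have "n = 0" using principal_add_self[OF eu n e(2)] .
    moreover have "n \<in> FS x 1" using uf_principal[OF eu n] eFS by blast
    then obtain F where F: "finite F" "F \<noteq> {}" "F \<subseteq> {1..}" "n = (\<Sum>j\<in>F. x j)"
      unfolding FS_def by blast
    obtain j where j: "j \<in> F" using F(2) by blast
    have "x j \<le> (\<Sum>j\<in>F. x j)" by (rule member_le_sum) (use j F(1) in auto)
    then have "x j \<le> n" using F(4) by simp
    moreover have "0 < j" using j F(3) by auto
    then have "x 0 < x j" using x unfolding strict_mono_def by blast
    ultimately show False by simp
  qed
  then show ?thesis using eu e(2) Ae by blast
qed

definition star :: "nat set set \<Rightarrow> nat set \<Rightarrow> nat set" where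
  "star p X = {n \<in> X. shift_set X n \<in> p}"

primrec seqC :: "nat set set \<Rightarrow> nat set \<Rightarrow> nat \<Rightarrow> nat set \<times> nat" where
  "seqC p A 0 = (star p A, SOME y. y \<in> star p A)"
| "seqC p A (Suc k) = (let c = fst (seqC p A k); xk = snd (seqC p A k);
      c' = star p (c \<inter> shift_set c xk) in (c', SOME y. y \<in> c' \<and> xk < y))"

lemma star_sub: "star p X \<subseteq> X"
  unfolding star_def by auto

lemma star_in:
  assumes p: "is_ultrafilter p" and idem: "p \<oplus>\<^sub>\<beta> p = p" and X: "X \<in> p"
  shows "star p X \<in> p"
proof -
  have "{n. shift_set X n \<in> p} \<in> p" using X idem uf_add_mem by metis
  moreover have "star p X = X \<inter> {n. shift_set X n \<in> p}" unfolding star_def by auto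
  ultimately show ?thesis using uf_Int[OF p] X by simp
qed

lemma star_closed:
  assumes p: "is_ultrafilter p" and idem: "p \<oplus>\<^sub>\<beta> p = p" and n: "n \<in> star p X"
  shows "shift_set (star p X) n \<in> p"
proof -
  have eq: "shift_set (star p X) n = star p (shift_set X n)"
    unfolding star_def shift_set_def by (auto simp: add.assoc)
  have "shift_set X n \<in> p" using n unfolding star_def by simp
  then show ?thesis unfolding eq using star_in[OF p idem] by blast
qed

lemma uf_unbounded:
  assumes p: "is_ultrafilter p" and np: "\<not> principal p" and X: "X \<in> p"
  shows "\<exists>y. y \<in> X \<and> a < y"
proof (rule ccontr)
  assume "\<not> (\<exists>y. y \<in> X \<and> a < y)"
  then have "X \<subseteq> {..a}" by auto
  then have "finite X" using finite_subset by blast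
  then show False using uf_finite_notin[OF p np] X by blast
qed

lemma idem_IP:
  assumes p: "is_ultrafilter p" and np: "\<not> principal p" and idem: "p \<oplus>\<^sub>\<beta> p = p" and A: "A \<in> p"
  shows "IP_set A"
proof -
  define C where "C k = fst (seqC p A k)" for k
  define x where "x k = snd (seqC p A k)" for k
  have CS: "C (Suc k) = star p (C k \<inter> shift_set (C k) (x k))" for k
    unfolding C_def x_def by (simp add: Let_def)
  have xS: "x (Suc k) = (SOME y. y \<in> C (Suc k) \<and> x k < y)" for k
    unfolding C_def x_def by (simp add: Let_def)
  have inv: "C k \<in> p \<and> x k \<in> C k \<and> (\<forall>n\<in>C k. shift_set (C k) n \<in> p)" for k
  proof (induction k)
    case 0
    have c0: "C 0 = star p A" unfolding C_def by simp
    have x0: "x 0 = (SOME y. y \<in> star p A)" unfolding x_def by simp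
    have "star p A \<in> p" using star_in[OF p idem A] .
    moreover then have "\<exists>y. y \<in> star p A" using uf_nonempty[OF p] by blast
    then have "x 0 \<in> star p A" unfolding x0 by (rule someI_ex)
    moreover have "\<forall>n\<in>star p A. shift_set (star p A) n \<in> p" using star_closed[OF p idem] by blast
    ultimately show ?case unfolding c0 by blast
  next
    case (Suc k)
    have "shift_set (C k) (x k) \<in> p" using Suc by blast
    then have "C k \<inter> shift_set (C k) (x k) \<in> p" using Suc uf_Int[OF p] by blast
    then have c: "C (Suc k) \<in> p" unfolding CS using star_in[OF p idem] by blast
    then have "\<exists>y. y \<in> C (Suc k) \<and> x k < y" using uf_unbounded[OF p np] by blast
    then have "x (Suc k) \<in> C (Suc k) \<and> x k < x (Suc k)" unfolding xS by (rule someI_ex)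
    moreover have "\<forall>n\<in>C (Suc k). shift_set (C (Suc k)) n \<in> p" unfolding CS using star_closed[OF p idem] by blast
    ultimately show ?case using c by blast
  qed
  have xinc: "x k < x (Suc k)" for k
  proof -
    have "C (Suc k) \<in> p" using inv by blast
    then have "\<exists>y. y \<in> C (Suc k) \<and> x k < y" using uf_unbounded[OF p np] by blast
    then have "x (Suc k) \<in> C (Suc k) \<and> x k < x (Suc k)" unfolding xS by (rule someI_ex)
    then show ?thesis by blast
  qed
  have Csub: "C (Suc k) \<subseteq> C k \<inter> shift_set (C k) (x k)" for k
    unfolding CS using star_sub by blast
  have main: "\<forall>k F. F \<subseteq> {k..<k + j} \<longrightarrow> F \<noteq> {} \<longrightarrow> (\<Sum>n\<in>F. x n) \<in> C k" for j
  proof (induction j)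
    case 0 then show ?case by auto
  next
    case (Suc j)
    show ?case
    proof (intro allI impI)
      fix k F assume F: "F \<subseteq> {k..<k + Suc j}" "F \<noteq> {}"
      show "(\<Sum>n\<in>F. x n) \<in> C k"
      proof (cases "k \<in> F")
        case False
        have "F \<subseteq> {Suc k..<Suc k + j}"
        proof
          fix n assume "n \<in> F"
          then have "k \<le> n" "n < k + Suc j" "n \<noteq> k" using F(1) False by auto
          then show "n \<in> {Suc k..<Suc k + j}" by simp
        qed
        then have "(\<Sum>n\<in>F. x n) \<in> C (Suc k)" using Suc.IH F(2) by blast
        then show ?thesis using Csub by blast
      next
        case True
        define F' where "F' = F - {k}"
        have fin: "finite F" using F(1) finite_subset by blast
        have sumF: "(\<Sum>n\<in>F. x n) = x k + (\<Sum>n\<in>F'. x n)"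
          unfolding F'_def using sum.remove[OF fin True] .
        show ?thesis
        proof (cases "F' = {}")
          case True
          then show ?thesis unfolding sumF using inv by simp
        next
          case False
          have "F' \<subseteq> {Suc k..<Suc k + j}"
          proof
            fix n assume "n \<in> F'"
            then have "k \<le> n" "n < k + Suc j" "n \<noteq> k" using F(1) unfolding F'_def by auto
            then show "n \<in> {Suc k..<Suc k + j}" by simp
          qed
          then have "(\<Sum>n\<in>F'. x n) \<in> C (Suc k)" using Suc.IH False by blast
          then have "(\<Sum>n\<in>F'. x n) \<in> shift_set (C k) (x k)" using Csub by blast
          then show ?thesis unfolding sumF shift_set_def by (simp add: add.commute)
        qed
      qed
    qed
  qed
  have "strict_mono x" unfolding strict_mono_Suc_iff using xinc by blast
  moreover have "(\<Sum>n\<in>F. x n) \<in> A" if "finite F" "F \<noteq> {}" for F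
  proof -
    have "F \<subseteq> {0..<0 + Suc (Max F)}" using Max_ge[OF that(1)] by (auto simp: less_Suc_eq_le)
    then have "(\<Sum>n\<in>F. x n) \<in> C 0" using main that(2) by blast
    moreover have "C 0 \<subseteq> A" unfolding C_def using star_sub by simp
    ultimately show ?thesis by blast
  qed
  ultimately show ?thesis unfolding IP_set_def by blast
qed

theorem theorem3:
  fixes Alph :: "'a set" and w :: "nat \<Rightarrow> 'a" and u :: "'a list"
  assumes "finite Alph" and "Alph \<noteq> {}"
    and "\<forall>n. w n \<in> Alph"
    and "uniformly_recurrent w"
    and "u \<noteq> []" and "set u \<subseteq> Alph"
  shows "IP_set (occurrences w u) \<longleftrightarrow> central (occurrences w u)"
proof
  have "range w \<subseteq> Alph" using assms(3) by auto
  then have f: "finite (range w)" using finite_subset[OF _ assms(1)] by simp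
  assume "IP_set (occurrences w u)"
  then obtain p where p: "is_ultrafilter p" "\<not> principal p" "p \<oplus>\<^sub>\<beta> p = p" "occurrences w u \<in> p"
    using IP_idem by blast
  show "central (occurrences w u)" using central_of_idem[OF f assms(4) p] .
next
  assume "central (occurrences w u)"
  then obtain p where mp: "minimal_idempotent p" and A: "occurrences w u \<in> p" unfolding central_def by blast
  have ip: "idempotent p" using mp unfolding minimal_idempotent_def by simp
  have "is_ultrafilter p" "\<not> principal p" "p \<oplus>\<^sub>\<beta> p = p"
    using ip unfolding idempotent_def betaN_def by simp_all
  then show "IP_set (occurrences w u)" using idem_IP[OF _ _ _ A] by blast
qed

end
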